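(* For every $\alpha\in(0,1)$ and $\delta>0$, $$L(\alpha;\delta)>\frac4\delta\Big(1-\frac{\pi^2}{16}-\frac12\alpha^2\Big).$$
   Context: For $s\ge0$ let $\phi_1(s)=\int_0^{\pi/2}\frac{\sin^2\theta}{(\sin^2\theta+s^2)^{1/2}}d\theta$ (strictly decreasing from $1$ to $0$, inverse $\phi_1^{-1}:(0,1]\to[0,\infty)$) and $\phi_2(s)=\int_0^{\pi/2}\frac{2\sin^2\theta+s^2}{(\sin^2\theta+s^2)^{1/2}}d\theta$. For $\alpha\in(0,1)$, $\delta>0$: $L(\alpha;\delta)=\frac4\delta\Big(1-\frac{\phi_2^2(\phi_1^{-1}(\alpha))}{4[1+(\phi_1^{-1}(\alpha))^2]}\Big)$. *)

theory Defs
  imports "HOL-Analysis.Analysis"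
begin

definition phi1 :: "real \<Rightarrow> real" where
  "phi1 s = integral {0..pi/2} (\<lambda>\<theta>. (sin \<theta>)^2 / sqrt ((sin \<theta>)^2 + s^2))"

definition phi2 :: "real \<Rightarrow> real" where
  "phi2 s = integral {0..pi/2} (\<lambda>\<theta>. (2 * (sin \<theta>)^2 + s^2) / sqrt ((sin \<theta>)^2 + s^2))"

text \<open>Inverse of phi1 restricted to [0,\<infinity>); phi1 is strictly decreasing there from 1 to 0.\<close>
definition phi1_inv :: "real \<Rightarrow> real" where
  "phi1_inv a = (THE s. s \<ge> 0 \<and> phi1 s = a)"

definition L :: "real \<Rightarrow> real \<Rightarrow> real" where
  "L \<alpha> \<delta> = 4 / \<delta> * (1 - (phi2 (phi1_inv \<alpha>))^2 / (4 * (1 + (phi1_inv \<alpha>)^2)))"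

end

theory Submission
  imports Defs
begin

lemma int_sin: "(sin has_integral 1) {0..pi/2}"
proof -
  have "((\<lambda>x. sin x) has_integral (- cos (pi/2)) - (- cos 0)) {0..pi/2}"
    by (rule fundamental_theorem_of_calculus)
      (auto intro!: derivative_eq_intros simp: has_real_derivative_iff_has_vector_derivative[symmetric])
  then show ?thesis by simp
qed

lemma cosd: "cos (x * 2) = 1 - 2 * (sin (x::real))^2"
  using cos_double_sin[of x] by (simp add: mult.commute)

lemma int_sin2: "((\<lambda>x. sin x ^ 2) has_integral pi/4) {0..pi/2}"
proof -
  have "((\<lambda>x. sin x ^ 2) has_integral ((pi/2)/2 - sin (2*(pi/2))/4) - (0/2 - sin (2*0)/4)) {0..pi/2}"
    apply (rule fundamental_theorem_of_calculus)
     apply simp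
    apply (simp add: has_real_derivative_iff_has_vector_derivative[symmetric])
    apply (rule derivative_eq_intros refl | simp)+
    apply (simp add: cos_double_sin field_simps cosd)
    done
  then show ?thesis by simp
qed

lemma int_const: "((\<lambda>x. c) has_integral c * (pi/2)) {0..pi/2}"
  using has_integral_const_real[of c 0 "pi/2"] by (simp add: mult.commute)

lemma sq_div_abs0: "(x::real)^2 / \<bar>x\<bar> = \<bar>x\<bar>"
  by (cases "x = 0") (simp_all add: power2_eq_square field_simps)

lemma sq_div_abs: "(x::real)^2 / sqrt (x^2) = \<bar>x\<bar>"
  using sq_div_abs0 by (cases "x = 0") (simp_all add: real_sqrt_abs power2_eq_square field_simps)

lemma cont_f: assumes "0 \<le> s"
  shows "continuous_on A (\<lambda>\<theta>. sin \<theta>^2 / sqrt (sin \<theta>^2 + s^2))"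
proof (cases "s = 0")
  case True
  then have eq: "(\<lambda>\<theta>. sin \<theta>^2 / sqrt (sin \<theta>^2 + s^2)) = (\<lambda>\<theta>. \<bar>sin \<theta>\<bar>)"
    by (simp add: sq_div_abs0)
  show ?thesis apply (subst eq) by (intro continuous_intros)
next
  case False
  then have "s^2 > 0" by simp
  then show ?thesis
    by (intro continuous_intros) (auto simp: add_nonneg_pos)
qed

lemma int_f: "0 \<le> s \<Longrightarrow> (\<lambda>\<theta>. sin \<theta>^2 / sqrt (sin \<theta>^2 + s^2)) integrable_on {0..pi/2}"
  by (rule integrable_continuous_interval, rule cont_f)

lemma lip_pt:
  fixes u s t :: real
  assumes "0 \<le> s" "0 \<le> t"
  shows "\<bar>u^2/sqrt(u^2+s^2) - u^2/sqrt(u^2+t^2)\<bar> \<le> \<bar>s-t\<bar>"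
proof (cases "u = 0")
  case True then show ?thesis by simp
next
  case False
  define a where "a = sqrt(u^2+s^2)"
  define b where "b = sqrt(u^2+t^2)"
  have u2: "u^2 > 0" using False by simp
  have a0: "a > 0" and b0: "b > 0" unfolding a_def b_def using u2 by (auto intro: add_pos_nonneg)
  have asq: "a^2 = u^2+s^2" and bsq: "b^2 = u^2+t^2" unfolding a_def b_def by (auto intro: add_nonneg_nonneg)
  have au: "\<bar>u\<bar> \<le> a"
  proof -
    have "sqrt(u^2) \<le> sqrt(u^2+s^2)" by (rule real_sqrt_le_mono) simp
    then show ?thesis unfolding a_def by (simp add: real_sqrt_abs)
  qed
  have bu: "\<bar>u\<bar> \<le> b"
  proof -
    have "sqrt(u^2) \<le> sqrt(u^2+t^2)" by (rule real_sqrt_le_mono) simp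
    then show ?thesis unfolding b_def by (simp add: real_sqrt_abs)
  qed
  have as: "s \<le> a"
  proof -
    have "sqrt(s^2) \<le> sqrt(u^2+s^2)" by (rule real_sqrt_le_mono) simp
    then show ?thesis unfolding a_def using assms by (simp add: real_sqrt_abs)
  qed
  have bt: "t \<le> b"
  proof -
    have "sqrt(t^2) \<le> sqrt(u^2+t^2)" by (rule real_sqrt_le_mono) simp
    then show ?thesis unfolding b_def using assms by (simp add: real_sqrt_abs)
  qed
  have e1: "\<bar>b-a\<bar> * (a+b) = \<bar>t-s\<bar> * (t+s)"
  proof -
    have "(b-a)*(a+b) = (t-s)*(t+s)" using asq bsq by (simp add: algebra_simps power2_eq_square)
    then have "\<bar>(b-a)*(a+b)\<bar> = \<bar>(t-s)*(t+s)\<bar>" by simp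
    then show ?thesis using a0 b0 assms by (simp add: abs_mult)
  qed
  have "\<bar>t-s\<bar> * (t+s) \<le> \<bar>t-s\<bar> * (a+b)" using as bt by (intro mult_left_mono) auto
  then have "\<bar>b-a\<bar> * (a+b) \<le> \<bar>t-s\<bar> * (a+b)" using e1 by simp
  then have ba: "\<bar>b-a\<bar> \<le> \<bar>s-t\<bar>" using a0 b0 by (simp add: abs_minus_commute)
  have "u^2 \<le> a*b"
  proof -
    have "\<bar>u\<bar>*\<bar>u\<bar> \<le> a*b" using au bu by (intro mult_mono) auto
    then show ?thesis by (simp add: power2_eq_square abs_mult_self_eq)
  qed
  have eq: "u^2/a - u^2/b = u^2 * (b-a) / (a*b)" using a0 b0 by (simp add: field_simps)
  have "\<bar>u^2 * (b-a) / (a*b)\<bar> = u^2 / (a*b) * \<bar>b-a\<bar>" using a0 b0 by (simp add: abs_mult)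
  also have "\<dots> \<le> 1 * \<bar>b-a\<bar>"
    using \<open>u^2 \<le> a*b\<close> a0 b0 by (intro mult_right_mono) auto
  finally show ?thesis using eq ba unfolding a_def b_def by simp
qed

lemma phi1_lip:
  assumes "0 \<le> s" "0 \<le> t"
  shows "\<bar>phi1 s - phi1 t\<bar> \<le> pi/2 * \<bar>s - t\<bar>"
proof -
  have "phi1 s - phi1 t = integral {0..pi/2} (\<lambda>\<theta>. sin \<theta>^2 / sqrt (sin \<theta>^2 + s^2) - sin \<theta>^2 / sqrt (sin \<theta>^2 + t^2))"
    unfolding phi1_def using int_f assms by (simp add: integral_diff)
  also have "\<bar>\<dots>\<bar> \<le> integral {0..pi/2} (\<lambda>\<theta>. \<bar>s - t\<bar>)"
    by (rule integral_norm_bound_integral[where 'n=real and 'a=real, unfolded real_norm_def])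
       (use int_f assms lip_pt in \<open>auto intro!: integrable_diff\<close>)
  also have "\<dots> = pi/2 * \<bar>s - t\<bar>" using int_const[of "\<bar>s-t\<bar>"] by (simp add: integral_unique)
  finally show ?thesis .
qed

lemma phi1_cont: "continuous_on {0..b} phi1"
proof (rule lipschitz_on_continuous_on[of "pi/2"], rule lipschitz_onI)
  fix x y assume "x \<in> {0..b}" "y \<in> {0..b}"
  then show "dist (phi1 x) (phi1 y) \<le> pi / 2 * dist x y" using phi1_lip[of x y] by (simp add: dist_real_def)
qed simp

lemma phi1_0: "phi1 0 = 1"
proof -
  have "phi1 0 = integral {0..pi/2} sin"
    unfolding phi1_def
  proof (rule integral_cong)
    fix x assume "x \<in> {0..pi/2}"
    then have "sin x \<ge> 0" by (intro sin_ge_zero) auto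
    then show "sin x ^ 2 / sqrt (sin x ^ 2 + 0 ^ 2) = sin x" by (cases "sin x = 0") (simp_all add: sq_div_abs power2_eq_square)
  qed
  then show ?thesis using int_sin by (simp add: integral_unique)
qed

lemma phi1_upper:
  assumes "0 < s" shows "phi1 s \<le> pi / (2 * s)"
proof -
  have "phi1 s \<le> integral {0..pi/2} (\<lambda>\<theta>. 1/s)"
    unfolding phi1_def
  proof (rule integral_le)
    show "(\<lambda>\<theta>. sin \<theta>^2 / sqrt (sin \<theta>^2 + s^2)) integrable_on {0..pi/2}" using int_f assms by simp
    show "(\<lambda>\<theta>. 1/s) integrable_on {0..pi/2}" using int_const has_integral_integrable by blast
    fix x
    have r: "s \<le> sqrt (sin x^2 + s^2)"
    proof -
      have "sqrt(s^2) \<le> sqrt(sin x^2+s^2)" by (rule real_sqrt_le_mono) simp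
      then show ?thesis using assms by simp
    qed
    have sq0: "0 < sqrt (sin x^2 + s^2)" using r assms by linarith
    have "sin x^2 \<le> 1" by (simp add: abs_square_le_1)
    then have "sin x^2 / sqrt (sin x^2 + s^2) \<le> 1 / sqrt (sin x^2 + s^2)"
      using r assms by (intro divide_right_mono) auto
    also have "1 / sqrt (sin x^2 + s^2) \<le> 1/s" using r assms \<open>0 < sqrt (sin x^2 + s^2)\<close> by (intro divide_left_mono) auto
    finally show "sin x^2 / sqrt (sin x^2 + s^2) \<le> 1/s" .
  qed
  also have "\<dots> = pi/(2 * s)" using int_const[of "1/s"] by (simp add: integral_unique)
  finally show ?thesis .
qed

lemma phi1_strict:
  assumes "0 \<le> s" "s < t" shows "phi1 t < phi1 s"
proof -
  define g where "g = (\<lambda>\<theta>. sin \<theta>^2 / sqrt (sin \<theta>^2 + s^2) - sin \<theta>^2 / sqrt (sin \<theta>^2 + t^2))"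
  have t0: "0 \<le> t" using assms by simp
  have cg: "continuous_on {0..pi/2} g" unfolding g_def using cont_f assms t0 by (intro continuous_on_diff) auto
  have gnn: "0 \<le> g x" for x
  proof (cases "sin x = 0")
    case True then show ?thesis by (simp add: g_def)
  next
    case False
    then have "0 < sqrt (sin x^2 + s^2)" by (simp add: add_pos_nonneg)
    moreover have "sqrt (sin x^2 + s^2) \<le> sqrt (sin x^2 + t^2)"
      using assms by (intro real_sqrt_le_mono add_left_mono power_mono) auto
    ultimately show ?thesis unfolding g_def by (simp add: divide_left_mono)
  qed
  have gpos: "g (pi/2) \<noteq> 0"
  proof -
    have st: "s^2 < t^2" using assms by (simp add: power_strict_mono)
    have "sqrt (1 + s^2) < sqrt (1 + t^2)" using st by simp
    then have "1/sqrt (1 + t^2) < 1/sqrt(1+s^2)" by (simp add: divide_strict_left_mono add_pos_nonneg)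
    then show ?thesis using st by (simp add: g_def)
  qed
  have i0: "0 \<le> integral {0..pi/2} g" using cg gnn by (intro integral_nonneg integrable_continuous_interval) auto
  have "integral {0..pi/2} g \<noteq> 0"
    using integral_eq_0_iff[OF cg _ ] gnn gpos pi_gt_zero by force
  moreover have "integral {0..pi/2} g = phi1 s - phi1 t"
    unfolding phi1_def g_def using int_f assms t0 by (simp add: integral_diff)
  ultimately show ?thesis using i0 by linarith
qed

lemma phi1_inv:
  assumes "0 < a" "a < 1"
  shows "phi1_inv a \<ge> 0 \<and> phi1 (phi1_inv a) = a"
proof -
  have ex: "\<exists>s. s \<ge> 0 \<and> phi1 s = a"
  proof -
    have "phi1 (2/a) \<le> pi / (2 * (2/a))" using phi1_upper[of "2/a"] assms by simp
    also have "\<dots> = pi*a/4" by simp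
    also have "\<dots> \<le> a" using pi_less_4 assms by simp
    finally have "phi1 (2/a) \<le> a" .
    moreover have "a \<le> phi1 0" using phi1_0 assms by simp
    ultimately obtain x where "0 \<le> x" "x \<le> 2/a" "phi1 x = a"
      using IVT2'[of phi1 "2/a" a 0] phi1_cont assms by auto
    then show ?thesis by blast
  qed
  have un: "s = s'" if "s \<ge> 0 \<and> phi1 s = a" "s' \<ge> 0 \<and> phi1 s' = a" for s s'
    using phi1_strict[of s s'] phi1_strict[of s' s] that by (cases s s' rule: linorder_cases) auto
  have "\<exists>!s. s \<ge> 0 \<and> phi1 s = a" using ex un by blast
  then show ?thesis unfolding phi1_inv_def by (rule theI')
qed

definition EE :: "real \<Rightarrow> real" where
  "EE s = integral {0..pi/2} (\<lambda>\<theta>. sqrt (sin \<theta>^2 + s^2))"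

lemma int_E: "(\<lambda>\<theta>. sqrt (sin \<theta>^2 + s^2)) integrable_on {0..pi/2}"
  by (rule integrable_continuous_interval) (intro continuous_intros)

lemma EE_nonneg: "0 \<le> EE s"
  unfolding EE_def by (rule integral_nonneg[OF int_E]) simp

lemma phi2_dec: assumes "0 \<le> s" shows "phi2 s = EE s + phi1 s"
proof -
  have pt: "(2 * u^2 + s^2) / sqrt (u^2 + s^2) = sqrt (u^2 + s^2) + u^2 / sqrt (u^2 + s^2)" for u :: real
  proof -
    have "(2 * u^2 + s^2) / sqrt (u^2 + s^2) = (u^2 + s^2) / sqrt (u^2 + s^2) + u^2 / sqrt (u^2 + s^2)"
      by (simp add: add_divide_distrib[symmetric])
    also have "(u^2 + s^2) / sqrt (u^2 + s^2) = sqrt (u^2 + s^2)" by (rule real_div_sqrt) simp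
    finally show ?thesis .
  qed
  have "phi2 s = integral {0..pi/2} (\<lambda>\<theta>. sqrt (sin \<theta>^2 + s^2) + sin \<theta>^2 / sqrt (sin \<theta>^2 + s^2))"
    unfolding phi2_def by (simp only: pt)
  also have "\<dots> = EE s + phi1 s"
    unfolding EE_def phi1_def using int_E int_f[OF assms] by (rule integral_add)
  finally show ?thesis .
qed

lemma EE_bound: assumes "0 \<le> s" shows "EE s < pi * sqrt (1/2 + s^2) / 2"
proof -
  define c where "c = sqrt (1/2 + s^2)"
  have c0: "c > 0" unfolding c_def by (simp add: add_pos_nonneg)
  have c2: "c^2 = 1/2 + s^2" unfolding c_def by (simp add: add_pos_nonneg less_imp_le)
  define h where "h = (\<lambda>\<theta>. (sin \<theta>^2 + s^2 + c^2) / (2*c) - sqrt (sin \<theta>^2 + s^2))"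
  have ch: "continuous_on {0..pi/2} h" unfolding h_def using c0 by (intro continuous_intros) auto
  have hform: "h \<theta> = (sqrt (sin \<theta>^2 + s^2) - c)^2 / (2*c)" for \<theta>
  proof -
    define r where "r = sqrt (sin \<theta>^2 + s^2)"
    have r2: "r^2 = sin \<theta>^2 + s^2" unfolding r_def by simp
    show ?thesis unfolding h_def r_def[symmetric] r2[symmetric] using c0
      by (simp add: field_simps power2_eq_square)
  qed
  have hnn: "0 \<le> h \<theta>" for \<theta> unfolding hform using c0 by simp
  have "s \<noteq> c"
  proof
    assume "s = c" then have "s^2 = c^2" by simp
    then show False using c2 by simp
  qed
  then have h0: "h 0 \<noteq> 0" unfolding hform using c0 assms by simp
  have "integral {0..pi/2} h \<noteq> 0"
    using integral_eq_0_iff[OF ch] hnn h0 pi_gt_zero by force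
  moreover have "0 \<le> integral {0..pi/2} h" using ch hnn by (intro integral_nonneg integrable_continuous_interval) auto
  moreover have hi: "((\<lambda>\<theta>. (sin \<theta>^2 + s^2 + c^2) / (2*c)) has_integral (pi/4 + (s^2 + c^2) * (pi/2)) / (2*c)) {0..pi/2}"
    using has_integral_add[OF int_sin2 int_const[of "s^2 + c^2"]] by (intro has_integral_divide) (simp add: add.assoc)
  have "integral {0..pi/2} h = integral {0..pi/2} (\<lambda>\<theta>. (sin \<theta>^2 + s^2 + c^2) / (2*c)) - EE s"
    unfolding h_def EE_def by (rule integral_diff[OF has_integral_integrable[OF hi] int_E])
  then have "integral {0..pi/2} h = (pi/4 + (s^2 + c^2) * (pi/2)) / (2*c) - EE s"
    using integral_unique[OF hi] by simp
  moreover have "(pi/4 + (s^2 + c^2) * (pi/2)) / (2*c) = pi * c / 2"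
  proof -
    have "pi/4 + (s^2 + c^2) * (pi/2) - pi * c^2 = (pi/2) * (s^2 + 1/2 - c^2)" by (simp add: algebra_simps)
    also have "\<dots> = 0" using c2 by simp
    finally have "pi/4 + (s^2 + c^2) * (pi/2) = pi * c^2" by simp
    then show ?thesis using c0 by (simp add: power2_eq_square)
  qed
  ultimately show ?thesis unfolding c_def by linarith
qed

lemma key_alg:
  fixes E a s :: real
  assumes "0 \<le> E" "E^2 < pi^2 * (1 + 2 * s^2) / 8"
  shows "(E + a)^2 / (4 * (1 + s^2)) < pi^2/16 + a^2/2"
proof -
  define P where "P = 1 + 2 * s^2"
  have P0: "P > 0" unfolding P_def by (simp add: add_pos_nonneg)
  have "0 \<le> (E - P*a)^2" by simp
  then have i1: "P*(E+a)^2 \<le> (P+1)*E^2 + P*(P+1)*a^2"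
    by (simp add: power2_eq_square algebra_simps)
  have i2: "(P+1)*E^2 < (P+1)*(pi^2*P/8)" using assms P0 unfolding P_def by (intro mult_strict_left_mono) auto
  have "P*((P+1)*(pi^2/8 + a^2)) = (P+1)*(pi^2*P/8) + P*(P+1)*a^2" by (simp add: algebra_simps)
  then have "P*(E+a)^2 < P*((P+1)*(pi^2/8 + a^2))" using i1 i2 by linarith
  then have "(E+a)^2 < (P+1)*(pi^2/8 + a^2)" using P0 by simp
  then have "(E+a)^2 < (4*(1+s^2)) * (pi^2/16 + a^2/2)" unfolding P_def by (simp add: algebra_simps)
  moreover have "0 < 4*(1+s^2)" by (simp add: add_pos_nonneg)
  ultimately show ?thesis by (simp add: divide_less_eq mult.commute)
qed

theorem mainTheorem16:
  fixes \<alpha> \<delta> :: real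
  assumes "0 < \<alpha>" and "\<alpha> < 1" and "0 < \<delta>"
  shows "L \<alpha> \<delta> > 4 / \<delta> * (1 - pi^2 / 16 - \<alpha>^2 / 2)"
proof -
  define s where "s = phi1_inv \<alpha>"
  have s0: "0 \<le> s" and ps: "phi1 s = \<alpha>" using phi1_inv[OF assms(1,2)] unfolding s_def by auto
  have Eb: "EE s < pi * sqrt (1/2 + s^2) / 2" by (rule EE_bound[OF s0])
  have "EE s ^2 < (pi * sqrt (1/2 + s^2) / 2)^2"
    using Eb EE_nonneg by (intro power_strict_mono) auto
  also have "\<dots> = pi^2 * (1 + 2 * s^2) / 8"
    by (simp add: power_mult_distrib power_divide add_pos_nonneg less_imp_le field_simps)
  finally have "(EE s + \<alpha>)^2 / (4 * (1 + s^2)) < pi^2/16 + \<alpha>^2/2"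
    using key_alg EE_nonneg by blast
  then have "(phi2 s)^2 / (4 * (1 + s^2)) < pi^2/16 + \<alpha>^2/2"
    using phi2_dec[OF s0] ps by simp
  then have "1 - pi^2/16 - \<alpha>^2/2 < 1 - (phi2 s)^2 / (4 * (1 + s^2))" by linarith
  then show ?thesis unfolding L_def s_def[symmetric] using assms(3)
    by (intro mult_strict_left_mono) auto
qed

end
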